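(* Let $n$ be an even perfect square. Then $D_{S(n)^*}=C_{S(n)^*}=4$.
   Context: For a natural number $n$, $\mathbb Z_n=\mathbb Z/n\mathbb Z$, $S(n)=\{x^2:x\in\mathbb Z_n\}$, $S(n)^*=S(n)\setminus\{0\}$. For $A\subseteq\mathbb Z_n$, a sequence $(y_1,\dots,y_t)$ ($t\ge1$) in $\mathbb Z_n$ is an $A$-weighted zero-sum sequence if there exist $a_1,\dots,a_t\in A$ with $\sum a_iy_i=0$; a sequence has an $A$-weighted zero-sum subsequence if some nonempty subsequence is an $A$-weighted zero-sum sequence. $D_A(n)$ is the least positive integer $t$ such that every sequence of length $t$ in $\mathbb Z_n$ has an $A$-weighted zero-sum subsequence; $C_A(n)$ is the least positive integer $t$ such that every sequence of length $t$ in $\mathbb Z_n$ has an $A$-weighted zero-sum subsequence consisting of consecutive terms. $D_{S(n)^*}=D_{S(n)^*}(n)$, $C_{S(n)^*}=C_{S(n)^*}(n)$. *)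

theory Defs
  imports Main
begin

(* Z_n is represented by the residues {0..<n} (as integers), arithmetic taken mod n. *)

definition sq_set :: "nat \<Rightarrow> int set" where
  "sq_set n = {(x^2) mod int n | x. x \<in> {0..<int n}}"

definition sq_set_star :: "nat \<Rightarrow> int set" where
  "sq_set_star n = sq_set n - {0}"

definition weighted_zero_sum :: "nat \<Rightarrow> int set \<Rightarrow> (nat \<Rightarrow> int) \<Rightarrow> nat set \<Rightarrow> bool" where
  "weighted_zero_sum n A y I \<longleftrightarrow>
     (\<exists>a. (\<forall>i\<in>I. a i \<in> A) \<and> (\<Sum>i\<in>I. a i * y i) mod int n = 0)"

definition D_const :: "int set \<Rightarrow> nat \<Rightarrow> nat" where
  "D_const A n = (LEAST t. t > 0 \<and>
     (\<forall>y. (\<forall>i<t. y i \<in> {0..<int n}) \<longrightarrow>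
        (\<exists>I. I \<subseteq> {..<t} \<and> I \<noteq> {} \<and> weighted_zero_sum n A y I)))"

definition C_const :: "int set \<Rightarrow> nat \<Rightarrow> nat" where
  "C_const A n = (LEAST t. t > 0 \<and>
     (\<forall>y. (\<forall>i<t. y i \<in> {0..<int n}) \<longrightarrow>
        (\<exists>i j. i < j \<and> j \<le> t \<and> weighted_zero_sum n A y {i..<j})))"

end

theory Submission
  imports Defs "HOL-Number_Theory.Number_Theory"
begin

lemma nonres_exists:
  fixes p :: nat assumes p: "prime p" "odd p"
  shows "\<exists>g::int. 0 < g \<and> g < int p \<and> (\<forall>x::int. \<not> [x^2 = g] (mod int p))"
proof -
  define P where "P = int p"
  have "p \<ge> 2" using p prime_ge_2_nat by blast
  moreover have "p \<noteq> 2" using p by auto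
  ultimately have P3: "P \<ge> 3" unfolding P_def by simp
  define R where "R = (\<lambda>x. x^2 mod P) ` {1..(P-1) div 2}"
  have "card R \<le> card {1..(P-1) div 2}" unfolding R_def by (rule card_image_le) simp
  also have "\<dots> < card {1..P-1}" using P3 by simp
  finally have "\<not> {1..P-1} \<subseteq> R" by (metis card_mono finite_imageI finite_atLeastAtMost_int R_def not_le)
  then obtain g where g: "g \<in> {1..P-1}" "g \<notin> R" by blast
  have "\<not> [x^2 = g] (mod P)" for x
  proof
    assume c: "[x^2 = g] (mod P)"
    define r where "r = x mod P"
    have r: "0 \<le> r" "r < P" using P3 unfolding r_def by auto
    have c2: "[r^2 = g] (mod P)" using c unfolding r_def by (metis cong_def power_mod)
    have gm: "g mod P = g" using g by auto
    show False
    proof (cases "r = 0")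
      case True then show ?thesis using c2 g gm by (simp add: cong_def power2_eq_square)
    next
      case False
      show ?thesis
      proof (cases "r \<le> (P-1) div 2")
        case True
        then have "r^2 mod P \<in> R" unfolding R_def using False r by auto
        then show ?thesis using c2 gm g by (simp add: cong_def)
      next
        case False
        define r' where "r' = P - r"
        have "odd P" using p unfolding P_def by simp
        then obtain k where k: "P = 2*k+1" by (metis oddE)
        have "r' \<in> {1..(P-1) div 2}" using False r unfolding r'_def k by auto
        moreover have "[r'^2 = r^2] (mod P)"
        proof -
          have "r'^2 = r^2 + P * (P - 2*r)" unfolding r'_def by (simp add: power2_eq_square algebra_simps)
          then show ?thesis by (simp add: cong_def)
        qed
        ultimately have "g \<in> R" using c2 gm unfolding R_def
          by (metis (no_types, lifting) cong_def image_eqI)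
        then show ?thesis using g by simp
      qed
    qed
  qed
  then have "\<forall>x. \<not> [x^2 = g] (mod int p)" unfolding P_def by blast
  moreover have "0 < g" "g < int p" using g unfolding P_def by auto
  ultimately show ?thesis by blast
qed


definition SS :: "int \<Rightarrow> int \<Rightarrow> int \<Rightarrow> int \<Rightarrow> int \<Rightarrow> int \<Rightarrow> int" where
  "SS Y0 Y1 Y2 x0 x1 x2 = x0^2*Y0 + x1^2*Y1 + x2^2*Y2"


lemma sq_mod4: fixes x Y :: int assumes "Y mod 4 = 1"
  shows "(x^2*Y) mod 4 = (if even x then 0 else 1)"
proof (cases "even x")
  case True
  then obtain a where "x = 2*a" by blast
  then show ?thesis using True by (simp add: power2_eq_square)
next
  case False
  then obtain a where a: "x = 2*a+1" by (metis oddE)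
  have "x^2*Y = 4*((a^2+a)*Y) + Y" unfolding a by (simp add: power2_eq_square algebra_simps)
  then have "(x^2*Y) mod 4 = Y mod 4" by simp
  then show ?thesis using False assms by simp
qed

lemma H2: fixes Y0 Y1 Y2 x0 x1 x2 :: int
  assumes "Y0 mod 4 = 1" "Y1 mod 4 = 1" "Y2 mod 4 = 1" "4 dvd SS Y0 Y1 Y2 x0 x1 x2"
  shows "2 dvd x0 \<and> 2 dvd x1 \<and> 2 dvd x2"
proof -
  have "SS Y0 Y1 Y2 x0 x1 x2 mod 4 = (((x0^2*Y0) mod 4 + (x1^2*Y1) mod 4) mod 4 + (x2^2*Y2) mod 4) mod 4"
    unfolding SS_def by (simp add: mod_add_eq)
  moreover have "SS Y0 Y1 Y2 x0 x1 x2 mod 4 = 0" using assms(4) by simp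
  ultimately have "(((if even x0 then 0 else 1) + (if even x1 then 0 else 1)) mod 4 + (if even x2 then 0 else (1::int))) mod 4 = 0"
    using sq_mod4[OF assms(1), of x0] sq_mod4[OF assms(2), of x1] sq_mod4[OF assms(3), of x2] by simp
  then show ?thesis by (cases "even x0"; cases "even x1"; cases "even x2") simp_all
qed


lemma Hodd: fixes q Y0 Y1 Y2 x0 x1 x2 g :: int
  assumes q: "prime q" and g: "\<forall>x. \<not> [x^2 = g] (mod q)"
    and y0: "[Y0 = 1] (mod q)" and y1: "[Y1 = -g] (mod q)" and y2: "[Y2 = q] (mod q^2)"
    and d: "q^2 dvd SS Y0 Y1 Y2 x0 x1 x2"
  shows "q dvd x0 \<and> q dvd x1 \<and> q dvd x2"
proof -
  have "q dvd q^2" by simp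
  with y2 have "[Y2 = q] (mod q)" by (rule cong_dvd_modulus)
  moreover have "[q = 0] (mod q)" by (simp add: cong_0_iff)
  ultimately have y2': "[Y2 = 0] (mod q)" by (rule cong_trans)
  have "q dvd SS Y0 Y1 Y2 x0 x1 x2" using dvd_trans[OF \<open>q dvd q^2\<close> d] .
  then have c1: "[SS Y0 Y1 Y2 x0 x1 x2 = 0] (mod q)" by (simp add: cong_0_iff)
  have c2: "[SS Y0 Y1 Y2 x0 x1 x2 = x0^2*1 + x1^2*(-g) + x2^2*0] (mod q)"
    unfolding SS_def using y0 y1 y2' by (intro cong_add cong_mult cong_refl) 
  have "[x0^2*1 + x1^2*(-g) + x2^2*0 = 0] (mod q)" using cong_trans[OF cong_sym[OF c2] c1] .
  then have "q dvd x0^2 - g*x1^2" by (simp add: cong_0_iff algebra_simps)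
  then have e: "[x0^2 = g*x1^2] (mod q)" by (simp add: cong_iff_dvd_diff)
  have d01: "q dvd x0 \<and> q dvd x1"
  proof (cases "q dvd x1")
    case True
    then have "q dvd g*x1^2" by (simp add: power2_eq_square)
    then have "[g*x1^2 = 0] (mod q)" by (simp add: cong_0_iff)
    then have "[x0^2 = 0] (mod q)" using e by (rule cong_trans[rotated])
    then have "q dvd x0^2" by (simp add: cong_0_iff)
    then show ?thesis using True q prime_dvd_power by blast
  next
    case False
    then have "coprime x1 q" using q by (simp add: prime_imp_coprime coprime_commute)
    then obtain w where w: "[x1 * w = 1] (mod q)" using cong_solve_coprime_int by blast
    have "[x0^2*w^2 = g*x1^2*w^2] (mod q)" using cong_mult[OF e cong_refl[of "w^2"]] .
    then have h1: "[(x0*w)^2 = g*(x1*w)^2] (mod q)"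
      by (simp add: power_mult_distrib mult.assoc)
    have "[g*(x1*w)^2 = g*1^2] (mod q)" using w by (intro cong_mult cong_refl cong_pow)
    then have "[(x0*w)^2 = g*1^2] (mod q)" using h1 by (rule cong_trans[rotated])
    then have "[(x0*w)^2 = g] (mod q)" by simp
    then show ?thesis using g by blast
  qed
  then obtain a0 a1 where a: "x0 = q*a0" "x1 = q*a1" by blast
  have "SS Y0 Y1 Y2 x0 x1 x2 = q^2 * (a0^2*Y0 + a1^2*Y1) + x2^2*Y2"
    unfolding SS_def a by (simp add: power_mult_distrib algebra_simps)
  then have "q^2 dvd x2^2*Y2" using d by (simp add: dvd_add_right_iff)
  moreover obtain k where k: "Y2 = q + q^2*k" using cong_sym[OF y2] unfolding cong_iff_lin by blast
  ultimately have "q*q dvd q*(x2^2*(1+q*k))" by (simp add: power2_eq_square algebra_simps)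
  then have "q dvd x2^2*(1+q*k)" using q by simp
  moreover have "\<not> q dvd 1+q*k"
  proof
    assume "q dvd 1+q*k"
    then have "q dvd 1" by (simp add: dvd_add_left_iff)
    then show False using q not_prime_unit by blast
  qed
  ultimately have "q dvd x2^2" using q prime_dvd_mult_iff by blast
  then have "q dvd x2" using q prime_dvd_power by blast
  then show ?thesis using d01 by blast
qed


lemma SS_scale: "SS Y0 Y1 Y2 (c*a0) (c*a1) (c*a2) = c^2 * SS Y0 Y1 Y2 a0 a1 a2"
  unfolding SS_def by (simp add: power_mult_distrib algebra_simps)

lemma descent:
  fixes m :: nat and Y0 Y1 Y2 :: int
  assumes m: "m > 0"
    and H: "\<And>q x0 x1 x2. prime q \<Longrightarrow> q dvd m \<Longrightarrow> (int q)^2 dvd SS Y0 Y1 Y2 x0 x1 x2 \<Longrightarrow>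
              int q dvd x0 \<and> int q dvd x1 \<and> int q dvd x2"
  shows "k dvd m \<Longrightarrow> (int k)^2 dvd SS Y0 Y1 Y2 x0 x1 x2 \<Longrightarrow> int k dvd x0 \<and> int k dvd x1 \<and> int k dvd x2"
proof (induction k arbitrary: x0 x1 x2 rule: less_induct)
  case (less k)
  show ?case
  proof (cases "k = 1")
    case True then show ?thesis by simp
  next
    case False
    then obtain q where q: "prime q" "q dvd k" using prime_factor_nat by blast
    have k0: "k \<noteq> 0" using less.prems m by auto
    obtain k' where k': "k = q * k'" using q by blast
    have qm: "q dvd m" using q less.prems dvd_trans by blast
    have "(int q)^2 dvd (int k)^2" using k' by simp
    then have "(int q)^2 dvd SS Y0 Y1 Y2 x0 x1 x2" using less.prems(2) by (rule dvd_trans)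
    then have "int q dvd x0 \<and> int q dvd x1 \<and> int q dvd x2" using H q qm by blast
    then obtain a0 a1 a2 where a: "x0 = int q * a0" "x1 = int q * a1" "x2 = int q * a2" by blast
    have "(int q)^2 * (int k')^2 dvd (int q)^2 * SS Y0 Y1 Y2 a0 a1 a2"
      using less.prems(2) unfolding a SS_scale k' by (simp add: power_mult_distrib)
    moreover have "(int q)^2 \<noteq> 0" using q by (simp add: prime_gt_0_nat)
    ultimately have dk: "(int k')^2 dvd SS Y0 Y1 Y2 a0 a1 a2" by simp
    have "q \<ge> 2" using q prime_ge_2_nat by blast
    moreover have "k' > 0" using k0 k' by simp
    ultimately have "k' < k" using k' by simp
    moreover have "k' dvd m" using less.prems k' by (metis dvd_mult_right)
    ultimately have "int k' dvd a0 \<and> int k' dvd a1 \<and> int k' dvd a2" using less.IH dk by blast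
    then show ?thesis unfolding a k' by (auto intro: mult_dvd_mono)
  qed
qed

lemma construct:
  fixes m :: nat assumes m: "m > 0" "even m"
  shows "\<exists>Y1 Y2 :: int. Y1 mod 4 = 1 \<and> Y2 mod 4 = 1 \<and>
     (\<forall>q. prime q \<and> q dvd m \<and> q \<noteq> 2 \<longrightarrow>
        (\<exists>g. (\<forall>x. \<not> [x^2 = g] (mod int q)) \<and> [Y1 = -g] (mod int q) \<and> [Y2 = int q] (mod (int q)^2)))"
proof -
  have "\<forall>q. \<exists>g::int. prime q \<and> odd q \<longrightarrow> 0 < g \<and> g < int q \<and> (\<forall>x::int. \<not> [x^2 = g] (mod int q))"
    using nonres_exists by blast
  then obtain G where G: "\<And>q. prime q \<Longrightarrow> odd q \<Longrightarrow> 0 < G q \<and> G q < int q \<and> (\<forall>x::int. \<not> [x^2 = G q] (mod int q))"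
    by metis
  define A where "A = prime_factors m"
  have finA: "finite A" unfolding A_def by simp
  have cop: "\<forall>i\<in>A. \<forall>j\<in>A. i \<noteq> j \<longrightarrow> coprime (i^2) (j^2)"
    unfolding A_def by (auto intro: primes_coprime)
  obtain z1 where z1: "\<forall>i\<in>A. [z1 = (if i = 2 then 1 else nat (int i - G i))] (mod i^2)"
    using chinese_remainder_nat[OF finA cop, where u="\<lambda>i. if i = 2 then 1 else nat (int i - G i)"] by blast
  obtain z2 where z2: "\<forall>i\<in>A. [z2 = (if i = 2 then 1 else i)] (mod i^2)"
    using chinese_remainder_nat[OF finA cop, where u="\<lambda>i. if i = 2 then 1 else i"] by blast
  have twoA: "2 \<in> A" using m unfolding A_def by (simp add: in_prime_factors_iff)
  have "[z1 = 1] (mod 4)" using z1 twoA by force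
  then have "z1 mod 4 = 1" by (simp add: cong_def)
  then have Y1: "int z1 mod 4 = 1" by (metis of_nat_mod of_nat_1 of_nat_numeral)
  have "[z2 = 1] (mod 4)" using z2 twoA by force
  then have "z2 mod 4 = 1" by (simp add: cong_def)
  then have Y2: "int z2 mod 4 = 1" by (metis of_nat_mod of_nat_1 of_nat_numeral)
  have "\<exists>g. (\<forall>x. \<not> [x^2 = g] (mod int q)) \<and> [int z1 = -g] (mod int q) \<and> [int z2 = int q] (mod (int q)^2)"
    if q: "prime q" "q dvd m" "q \<noteq> 2" for q
  proof -
    have qA: "q \<in> A" using q m unfolding A_def by (simp add: in_prime_factors_iff)
    have "q \<ge> 2" using q prime_ge_2_nat by blast
    then have oq: "odd q" using q prime_odd_nat by simp
    note Gq = G[OF q(1) oq]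
    have c1: "[z1 = nat (int q - G q)] (mod q^2)" using z1 qA q by auto
    have "[int z1 = int q - G q] (mod (int q)^2)" using cong_int_iff[THEN iffD2, OF c1] Gq by simp
    then have "[int z1 = int q - G q] (mod int q)" by (rule cong_dvd_modulus) simp
    moreover have "[int q - G q = - G q] (mod int q)" by (simp add: cong_iff_dvd_diff)
    ultimately have e1: "[int z1 = - G q] (mod int q)" by (rule cong_trans)
    have c2: "[z2 = q] (mod q^2)" using z2 qA q by auto
    have e2: "[int z2 = int q] (mod (int q)^2)" using cong_int_iff[THEN iffD2, OF c2] by simp
    show ?thesis using Gq e1 e2 by blast
  qed
  then show ?thesis using Y1 Y2 by blast
qed


lemma lower:
  fixes n m :: nat assumes m: "m > 0" "even m" "n = m^2"
  shows "\<exists>y. (\<forall>i. y i \<in> {0..<int n}) \<and>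
     (\<forall>I. I \<subseteq> {..<3} \<and> I \<noteq> {} \<longrightarrow> \<not> weighted_zero_sum n (sq_set_star n) y I)"
proof -
  obtain Y1 Y2 :: int where Y: "Y1 mod 4 = 1" "Y2 mod 4 = 1"
    "\<And>q. prime q \<Longrightarrow> q dvd m \<Longrightarrow> q \<noteq> 2 \<Longrightarrow>
        (\<exists>g. (\<forall>x. \<not> [x^2 = g] (mod int q)) \<and> [Y1 = -g] (mod int q) \<and> [Y2 = int q] (mod (int q)^2))"
    using construct[OF m(1) m(2)] by blast
  define Yf where "Yf i = (if i = (0::nat) then (1::int) else if i = 1 then Y1 else Y2)" for i
  define y where "y i = Yf i mod int n" for i
  have n0: "n > 0" using m by simp
  have range: "\<forall>i. y i \<in> {0..<int n}" using n0 unfolding y_def by simp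
  have H: "int q dvd x0 \<and> int q dvd x1 \<and> int q dvd x2"
    if q: "prime q" "q dvd m" and dv: "(int q)^2 dvd SS 1 Y1 Y2 x0 x1 x2" for q x0 x1 x2
  proof (cases "q = 2")
    case True
    then have "4 dvd SS 1 Y1 Y2 x0 x1 x2" using dv by simp
    then have "2 dvd x0 \<and> 2 dvd x1 \<and> 2 dvd x2" using H2[of 1 Y1 Y2] Y by simp
    then show ?thesis using True by simp
  next
    case False
    then obtain g where g: "\<forall>x. \<not> [x^2 = g] (mod int q)" "[Y1 = -g] (mod int q)" "[Y2 = int q] (mod (int q)^2)"
      using Y(3)[OF q] by blast
    have "prime (int q)" using q by simp
    then show ?thesis using Hodd[of "int q" g 1 Y1 Y2] g dv by simp
  qed
  have free: "\<not> weighted_zero_sum n (sq_set_star n) y I" if I: "I \<subseteq> {..<3}" "I \<noteq> {}" for I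
  proof
    assume w: "weighted_zero_sum n (sq_set_star n) y I"
    have "\<exists>a. (\<forall>i\<in>I. a i \<in> sq_set_star n) \<and> (\<Sum>i\<in>I. a i * y i) mod int n = 0"
      using w unfolding weighted_zero_sum_def by simp
    then obtain a where a0: "(\<forall>i\<in>I. a i \<in> sq_set_star n) \<and> (\<Sum>i\<in>I. a i * y i) mod int n = 0"
      by (rule exE)
    note a = a0[THEN conjunct1] a0[THEN conjunct2]
    have "\<forall>i\<in>I. \<exists>x. x \<in> {0..<int n} \<and> a i = x^2 mod int n \<and> a i \<noteq> 0"
      using a(1) unfolding sq_set_star_def sq_set_def by blast
    then obtain x where x: "\<forall>i\<in>I. x i \<in> {0..<int n} \<and> a i = (x i)^2 mod int n \<and> a i \<noteq> 0"
      by metis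
    define z where "z i = (if i \<in> I then x i else 0)" for i
    have c1: "[(\<Sum>i\<in>I. a i * y i) = (\<Sum>i\<in>I. (x i)^2 * Yf i)] (mod int n)"
    proof (rule cong_sum)
      fix i assume "i \<in> I"
      then show "[a i * y i = (x i)^2 * Yf i] (mod int n)"
        unfolding cong_def y_def using x by (simp add: mod_mult_eq)
    qed
    have fin: "finite {..<(3::nat)}" by simp
    have s1: "(\<Sum>i\<in>I. (x i)^2 * Yf i) = (\<Sum>i\<in>{..<3}. (z i)^2 * Yf i)"
      by (rule sum.mono_neutral_cong_left[OF fin I(1)]) (auto simp: z_def)
    have s2: "(\<Sum>i\<in>{..<3}. (z i)^2 * Yf i) = SS 1 Y1 Y2 (z 0) (z 1) (z 2)"
      by (simp add: SS_def Yf_def numeral_3_eq_3 numeral_2_eq_2)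
    have "[(\<Sum>i\<in>I. a i * y i) = 0] (mod int n)" using a(2) by (simp add: cong_def)
    then have "[SS 1 Y1 Y2 (z 0) (z 1) (z 2) = 0] (mod int n)" using c1 s1 s2
      by (metis cong_sym cong_trans)
    then have dm: "(int m)^2 dvd SS 1 Y1 Y2 (z 0) (z 1) (z 2)" using m(3) by (simp add: cong_0_iff)
    have dz: "int m dvd z 0 \<and> int m dvd z 1 \<and> int m dvd z 2"
      using descent[OF m(1) H dvd_refl dm] .
    obtain i where i: "i \<in> I" using I(2) by blast
    then have "i < 3" using I(1) by auto
    then have "i = 0 \<or> i = 1 \<or> i = 2" by auto
    then have "int m dvd z i" using dz by auto
    then have "int m dvd x i" using i unfolding z_def by simp
    then have "(int m)^2 dvd (x i)^2" by simp
    then have "a i = 0" using x i m(3) by simp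
    then show False using x i by blast
  qed
  show ?thesis using range free by blast
qed

lemma upper:
  fixes n m :: nat assumes m: "m > 0" "even m" "n = m^2"
  shows "\<exists>i j. i < j \<and> j \<le> 4 \<and> weighted_zero_sum n (sq_set_star n) y {i..<j}"
proof -
  define h where "h = int (m div 2)"
  define w where "w = h^2"
  have hm: "int m = 2*h" using m(2) unfolding h_def by auto
  have h0: "h > 0" using m hm by simp
  have wn: "4 * w = int n" unfolding w_def using m(3) hm by (simp add: power2_eq_square)
  have wS: "w \<in> sq_set_star n"
  proof -
    have hh: "h \<le> h*h" using h0 by simp
    have "h < int n" using wn h0 hh unfolding w_def power2_eq_square by linarith
    have w0: "0 < w" using h0 unfolding w_def by simp
    have wmod: "w mod int n = w" using wn w0 by (intro mod_pos_pos_trivial) auto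
    have hin: "h \<in> {0..<int n}" using \<open>h < int n\<close> h0 by simp
    have "w \<in> {x^2 mod int n |x. x \<in> {0..<int n}}"
    proof -
      have e: "h^2 = h^2 mod int n" using wmod unfolding w_def by simp
      show ?thesis unfolding w_def using hin e by blast
    qed
    then show ?thesis unfolding sq_set_star_def sq_set_def using w0 by simp
  qed
  define P where "P k = (\<Sum>l\<in>{0..<k}. y l)" for k
  have "card ((\<lambda>k. P k mod 4) ` {0..<5::nat}) \<le> card {0..<4::int}"
    by (rule card_mono) auto
  then have "card ((\<lambda>k. P k mod 4) ` {0..<5::nat}) < card {0..<5::nat}" by simp
  then have "\<not> inj_on (\<lambda>k. P k mod 4) {0..<5::nat}" by (rule pigeonhole)
  then obtain i j where ij: "i < 5" "j < 5" "i \<noteq> j" "P i mod 4 = P j mod 4"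
    unfolding inj_on_def by auto
  obtain i' j' where ij': "i' < j'" "j' \<le> 4" "P i' mod 4 = P j' mod 4"
  proof (cases "i < j")
    case True then show ?thesis using that[of i j] ij by auto
  next
    case False then show ?thesis using that[of j i] ij by auto
  qed
  have split: "P j' = P i' + (\<Sum>l\<in>{i'..<j'}. y l)" unfolding P_def
    using sum.atLeastLessThan_concat[of 0 i' j' y] ij'(1) by simp
  have "4 dvd P j' - P i'" using ij'(3)[symmetric] by (simp add: mod_eq_dvd_iff)
  then obtain c where c: "P j' - P i' = 4*c" by blast
  have "(\<Sum>l\<in>{i'..<j'}. w * y l) = w * (P j' - P i')" using split by (simp add: sum_distrib_left)
  also have "\<dots> = int n * c" using c wn by (simp add: algebra_simps)
  finally have "(\<Sum>l\<in>{i'..<j'}. w * y l) mod int n = 0" by simp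
  then have "weighted_zero_sum n (sq_set_star n) y {i'..<j'}"
    unfolding weighted_zero_sum_def using wS by (intro exI[of _ "\<lambda>_. w"]) auto
  then show ?thesis using ij' by blast
qed

theorem mainTheorem9:
  fixes n :: nat
  assumes "n > 0" and "even n" and "\<exists>m::nat. n = m^2"
  shows "D_const (sq_set_star n) n = 4 \<and> C_const (sq_set_star n) n = 4"
proof -
  obtain m where mn: "n = m^2" using assms(3) by blast
  have m0: "m > 0" using assms(1) mn by simp
  have me: "even m" using assms(2) mn by simp
  obtain y0 where y0: "\<forall>i. y0 i \<in> {0..<int n}"
     "\<forall>I. I \<subseteq> {..<3} \<and> I \<noteq> {} \<longrightarrow> \<not> weighted_zero_sum n (sq_set_star n) y0 I"
    using lower[OF m0 me mn] by blast
  have D: "D_const (sq_set_star n) n = 4"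
    unfolding D_const_def
  proof (rule Least_equality)
    show "4 > (0::nat) \<and> (\<forall>y. (\<forall>i<4. y i \<in> {0..<int n}) \<longrightarrow>
        (\<exists>I. I \<subseteq> {..<4} \<and> I \<noteq> {} \<and> weighted_zero_sum n (sq_set_star n) y I))"
    proof (intro conjI allI impI)
      fix y :: "nat \<Rightarrow> int"
      obtain i j where "i < j" "j \<le> 4" "weighted_zero_sum n (sq_set_star n) y {i..<j}"
        using upper[OF m0 me mn] by blast
      then show "\<exists>I. I \<subseteq> {..<4} \<and> I \<noteq> {} \<and> weighted_zero_sum n (sq_set_star n) y I"
        by (intro exI[of _ "{i..<j}"]) auto
    qed simp
  next
    fix t assume t: "0 < t \<and> (\<forall>y. (\<forall>i<t. y i \<in> {0..<int n}) \<longrightarrow>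
        (\<exists>I. I \<subseteq> {..<t} \<and> I \<noteq> {} \<and> weighted_zero_sum n (sq_set_star n) y I))"
    show "4 \<le> t"
    proof (rule ccontr)
      assume "\<not> 4 \<le> t"
      then have "t \<le> 3" by simp
      have "\<forall>i<t. y0 i \<in> {0..<int n}" using y0(1) by blast
      then have "\<exists>I. I \<subseteq> {..<t} \<and> I \<noteq> {} \<and> weighted_zero_sum n (sq_set_star n) y0 I"
        by (rule mp[OF spec[where x=y0, OF conjunct2[OF t]]])
      then obtain I where I: "I \<subseteq> {..<t}" "I \<noteq> {}" "weighted_zero_sum n (sq_set_star n) y0 I"
        by blast
      have "{..<t} \<subseteq> {..<3}" using \<open>t \<le> 3\<close> by auto
      then have "I \<subseteq> {..<3}" using I(1) by (rule order_trans[rotated])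
      then show False using y0(2)[rule_format, of I] I(2,3) by simp
    qed
  qed
  have C: "C_const (sq_set_star n) n = 4"
    unfolding C_const_def
  proof (rule Least_equality)
    show "4 > (0::nat) \<and> (\<forall>y. (\<forall>i<4. y i \<in> {0..<int n}) \<longrightarrow>
        (\<exists>i j. i < j \<and> j \<le> 4 \<and> weighted_zero_sum n (sq_set_star n) y {i..<j}))"
      using upper[OF m0 me mn] by simp
  next
    fix t assume t: "0 < t \<and> (\<forall>y. (\<forall>i<t. y i \<in> {0..<int n}) \<longrightarrow>
        (\<exists>i j. i < j \<and> j \<le> t \<and> weighted_zero_sum n (sq_set_star n) y {i..<j}))"
    show "4 \<le> t"
    proof (rule ccontr)
      assume "\<not> 4 \<le> t"
      then have "t \<le> 3" by simp
      have "\<forall>i<t. y0 i \<in> {0..<int n}" using y0(1) by blast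
      then have "\<exists>i j. i < j \<and> j \<le> t \<and> weighted_zero_sum n (sq_set_star n) y0 {i..<j}"
        by (rule mp[OF spec[where x=y0, OF conjunct2[OF t]]])
      then obtain i j where ij: "i < j" "j \<le> t" "weighted_zero_sum n (sq_set_star n) y0 {i..<j}"
        by blast
      have "{i..<j} \<subseteq> {..<3}" "{i..<j} \<noteq> {}" using \<open>t \<le> 3\<close> ij(1,2) by auto
      then show False using y0(2)[rule_format, of "{i..<j}"] ij(3) by simp
    qed
  qed
  show ?thesis using D C by blast
qed

end
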